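(* For every positive integer $k$ there exists a finite-dimensional real $k$-step nilpotent Lie algebra carrying an abelian hypercomplex structure. Concretely, if $A$ is the complex commutative algebra of $(k+1)\times(k+1)$ complex upper triangular Toeplitz matrices with zero diagonal (matrices whose $(p,q)$ entry is $a_{q-p}$ for $q>p$ and $0$ otherwise, with $a_1,\dots,a_k\in\mathbb C$), then $\mathfrak{aff}(A)$ is $k$-step nilpotent and the structures $J(a,b)=(b,-a)$, $K(a,b)=(ia,-ib)$ form an abelian hypercomplex structure on it.
   Context: For a commutative associative algebra $A$ (viewed as a real algebra), $\mathfrak{aff}(A)$ is the real Lie algebra $A\oplus A$ with bracket $[(a,b),(a',b')]=(0,ab'-a'b)$. An abelian complex structure on a real Lie algebra is a linear map $J$ with $J^2=-\mathrm{Id}$ and $[Jx,Jy]=[x,y]$ for all $x,y$; an abelian hypercomplex structure is a pair of anticommuting abelian complex structures. A Lie algebra is $k$-step nilpotent if its lower central series $\mathfrak g^{1}=\mathfrak g$, $\mathfrak g^{j+1}=[\mathfrak g,\mathfrak g^j]$ satisfies $\mathfrak g^{k+1}=0\ne\mathfrak g^{k}$. *)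

theory Defs
  imports Complex_Main
begin

text \<open>Complex matrices are represented as functions nat => nat => complex; a
(k+1) x (k+1) matrix uses the indices 0..k and is zero outside that range.\<close>

type_synonym cmat = "nat \<Rightarrow> nat \<Rightarrow> complex"
type_synonym affel = "cmat \<times> cmat"

definition toeplitz_A :: "nat \<Rightarrow> cmat set" where
  "toeplitz_A k = {M. \<exists>a :: nat \<Rightarrow> complex. \<forall>p q.
      M p q = (if p \<le> k \<and> q \<le> k \<and> p < q then a (q - p) else 0)}"

definition mmul :: "nat \<Rightarrow> cmat \<Rightarrow> cmat \<Rightarrow> cmat" where
  "mmul k M N = (\<lambda>p q. if p \<le> k \<and> q \<le> k then (\<Sum>r\<le>k. M p r * N r q) else 0)"

definition vzero :: affel where
  "vzero = ((\<lambda>p q. 0), (\<lambda>p q. 0))"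

definition vadd :: "affel \<Rightarrow> affel \<Rightarrow> affel" where
  "vadd x y = ((\<lambda>p q. fst x p q + fst y p q), (\<lambda>p q. snd x p q + snd y p q))"

definition vscale :: "real \<Rightarrow> affel \<Rightarrow> affel" where
  "vscale c x = ((\<lambda>p q. of_real c * fst x p q), (\<lambda>p q. of_real c * snd x p q))"

definition vneg :: "affel \<Rightarrow> affel" where
  "vneg x = vscale (-1) x"

definition rspan :: "affel set \<Rightarrow> affel set" where
  "rspan S = {v. \<exists>(n::nat) (c :: nat \<Rightarrow> real) (u :: nat \<Rightarrow> affel). (\<forall>i<n. u i \<in> S) \<and>
      v = ((\<lambda>p q. \<Sum>i<n. of_real (c i) * fst (u i) p q),
           (\<lambda>p q. \<Sum>i<n. of_real (c i) * snd (u i) p q))}"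

definition aff_carrier :: "nat \<Rightarrow> affel set" where
  "aff_carrier k = toeplitz_A k \<times> toeplitz_A k"

definition aff_br :: "nat \<Rightarrow> affel \<Rightarrow> affel \<Rightarrow> affel" where
  "aff_br k x y = ((\<lambda>p q. 0),
      (\<lambda>p q. mmul k (fst x) (snd y) p q - mmul k (fst y) (snd x) p q))"

definition real_lie_algebra :: "affel set \<Rightarrow> (affel \<Rightarrow> affel \<Rightarrow> affel) \<Rightarrow> bool" where
  "real_lie_algebra V br \<longleftrightarrow>
     rspan V = V \<and>
     (\<forall>x\<in>V. \<forall>y\<in>V. br x y \<in> V) \<and>
     (\<forall>x\<in>V. \<forall>y\<in>V. \<forall>z\<in>V. \<forall>a b. br (vadd (vscale a x) (vscale b y)) z
                                    = vadd (vscale a (br x z)) (vscale b (br y z))) \<and>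
     (\<forall>x\<in>V. \<forall>y\<in>V. \<forall>z\<in>V. \<forall>a b. br z (vadd (vscale a x) (vscale b y))
                                    = vadd (vscale a (br z x)) (vscale b (br z y))) \<and>
     (\<forall>x\<in>V. br x x = vzero) \<and>
     (\<forall>x\<in>V. \<forall>y\<in>V. \<forall>z\<in>V.
        vadd (vadd (br x (br y z)) (br y (br z x))) (br z (br x y)) = vzero)"

definition finite_dim :: "affel set \<Rightarrow> bool" where
  "finite_dim V \<longleftrightarrow> (\<exists>B. finite B \<and> B \<subseteq> V \<and> rspan B = V)"

text \<open>Lower central series, shifted by one: lcs br V j is g^(j+1), i.e.
lcs br V 0 = g^1 = g and lcs br V (j+1) = [g, lcs br V j] (real span).\<close>
fun lcs :: "(affel \<Rightarrow> affel \<Rightarrow> affel) \<Rightarrow> affel set \<Rightarrow> nat \<Rightarrow> affel set" where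
  "lcs br V 0 = V"
| "lcs br V (Suc j) = rspan {br x y | x y. x \<in> V \<and> y \<in> lcs br V j}"

definition k_step_nilpotent :: "(affel \<Rightarrow> affel \<Rightarrow> affel) \<Rightarrow> affel set \<Rightarrow> nat \<Rightarrow> bool" where
  "k_step_nilpotent br V k \<longleftrightarrow> 1 \<le> k \<and> lcs br V k = {vzero} \<and> lcs br V (k - 1) \<noteq> {vzero}"

definition real_linear_on :: "affel set \<Rightarrow> (affel \<Rightarrow> affel) \<Rightarrow> bool" where
  "real_linear_on V J \<longleftrightarrow> (\<forall>x\<in>V. J x \<in> V) \<and>
     (\<forall>x\<in>V. \<forall>y\<in>V. \<forall>a b. J (vadd (vscale a x) (vscale b y)) = vadd (vscale a (J x)) (vscale b (J y)))"

definition abelian_complex_structure ::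
  "affel set \<Rightarrow> (affel \<Rightarrow> affel \<Rightarrow> affel) \<Rightarrow> (affel \<Rightarrow> affel) \<Rightarrow> bool" where
  "abelian_complex_structure V br J \<longleftrightarrow> real_linear_on V J \<and>
     (\<forall>x\<in>V. J (J x) = vneg x) \<and>
     (\<forall>x\<in>V. \<forall>y\<in>V. br (J x) (J y) = br x y)"

definition abelian_hypercomplex_structure ::
  "affel set \<Rightarrow> (affel \<Rightarrow> affel \<Rightarrow> affel) \<Rightarrow> (affel \<Rightarrow> affel) \<Rightarrow> (affel \<Rightarrow> affel) \<Rightarrow> bool" where
  "abelian_hypercomplex_structure V br J K \<longleftrightarrow>
     abelian_complex_structure V br J \<and> abelian_complex_structure V br K \<and>
     (\<forall>x\<in>V. J (K x) = vneg (K (J x)))"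

definition Jaff :: "affel \<Rightarrow> affel" where
  "Jaff x = (snd x, (\<lambda>p q. - fst x p q))"

definition Kaff :: "affel \<Rightarrow> affel" where
  "Kaff x = ((\<lambda>p q. \<i> * fst x p q), (\<lambda>p q. - \<i> * snd x p q))"

end

theory Submission
  imports Defs
begin

definition tp :: "nat \<Rightarrow> (nat \<Rightarrow> complex) \<Rightarrow> cmat" where
  "tp k a = (\<lambda>p q. if p \<le> k \<and> q \<le> k \<and> p < q then a (q - p) else 0)"

definition conv :: "(nat \<Rightarrow> complex) \<Rightarrow> (nat \<Rightarrow> complex) \<Rightarrow> nat \<Rightarrow> complex" where
  "conv a b m = (\<Sum>j\<in>{0<..<m}. a j * b (m - j))"

lemma toeplitz_A_eq: "toeplitz_A k = range (tp k)"
  unfolding toeplitz_A_def tp_def by (auto simp: fun_eq_iff)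

lemma inV_E: assumes "M \<in> toeplitz_A k" obtains a where "M = tp k a"
  using assms toeplitz_A_eq by auto

lemma tp_in[simp]: "tp k a \<in> toeplitz_A k" by (simp add: toeplitz_A_eq)

lemma conv_comm: "conv a b = conv b a"
proof
  fix m show "conv a b m = conv b a m"
    unfolding conv_def
    by (rule sum.reindex_bij_witness[where i="\<lambda>j. m - j" and j="\<lambda>j. m - j"]) auto
qed

lemma mmul_tp: "mmul k (tp k a) (tp k b) = tp k (conv a b)"
proof (intro ext)
  fix p q
  show "mmul k (tp k a) (tp k b) p q = tp k (conv a b) p q"
  proof (cases "p \<le> k \<and> q \<le> k")
    case True
    have "mmul k (tp k a) (tp k b) p q = (\<Sum>r\<le>k. if r \<in> {p<..<q} then a (r - p) * b (q - r) else 0)"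
      using True unfolding mmul_def tp_def by (simp, intro sum.cong) auto
    also have "\<dots> = (\<Sum>r\<in>{p<..<q}. a (r - p) * b (q - r))"
      using True by (subst sum.inter_restrict[symmetric]) (auto intro: sum.cong)
    also have "\<dots> = tp k (conv a b) p q"
    proof (cases "p < q")
      case True
      have "(\<Sum>r\<in>{p<..<q}. a (r - p) * b (q - r)) = (\<Sum>j\<in>{0<..<q-p}. a j * b (q - p - j))"
        by (rule sum.reindex_bij_witness[where i="\<lambda>j. j + p" and j="\<lambda>r. r - p"]) auto
      then show ?thesis using True \<open>p \<le> k \<and> q \<le> k\<close> by (simp add: tp_def conv_def)
    next
      case False then show ?thesis by (simp add: tp_def)
    qed
    finally show ?thesis .
  qed (auto simp: mmul_def tp_def)
qed

lemma mmul_comm: "M \<in> toeplitz_A k \<Longrightarrow> N \<in> toeplitz_A k \<Longrightarrow> mmul k M N = mmul k N M"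
  by (metis inV_E mmul_tp conv_comm)

lemma mmul_assoc: "mmul k (mmul k A B) C = mmul k A (mmul k B C)"
  unfolding mmul_def
  by (auto simp: fun_eq_iff sum_distrib_left sum_distrib_right mult.assoc intro: sum.swap)

lemma mmul_lin_left: "mmul k (\<lambda>p q. c * M p q + d * N p q) P = (\<lambda>p q. c * mmul k M P p q + d * mmul k N P p q)"
  unfolding mmul_def by (auto simp: fun_eq_iff sum.distrib sum_distrib_left algebra_simps)

lemma mmul_lin_right: "mmul k P (\<lambda>p q. c * M p q + d * N p q) = (\<lambda>p q. c * mmul k P M p q + d * mmul k P N p q)"
  unfolding mmul_def by (auto simp: fun_eq_iff sum.distrib sum_distrib_left algebra_simps)

lemma mmul_diff_right: "mmul k P (\<lambda>p q. M p q - N p q) = (\<lambda>p q. mmul k P M p q - mmul k P N p q)"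
  unfolding mmul_def by (auto simp: fun_eq_iff sum_subtractf algebra_simps)

lemma mmul_scale_left: "mmul k (\<lambda>p q. c * M p q) P = (\<lambda>p q. c * mmul k M P p q)"
  unfolding mmul_def by (auto simp: fun_eq_iff sum_distrib_left algebra_simps)

lemma mmul_scale_right: "mmul k P (\<lambda>p q. c * M p q) = (\<lambda>p q. c * mmul k P M p q)"
  unfolding mmul_def by (auto simp: fun_eq_iff sum_distrib_left algebra_simps)

lemma mmul_neg_left: "mmul k (\<lambda>p q. - M p q) P = (\<lambda>p q. - mmul k M P p q)"
  unfolding mmul_def by (auto simp: fun_eq_iff sum_negf)

lemma mmul_neg_right: "mmul k P (\<lambda>p q. - M p q) = (\<lambda>p q. - mmul k P M p q)"
  unfolding mmul_def by (auto simp: fun_eq_iff sum_negf)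

lemma mmul_zero_left[simp]: "mmul k (\<lambda>p q. 0) P = (\<lambda>p q. 0)"
  unfolding mmul_def by (simp add: fun_eq_iff)

lemma V_lin: "M \<in> toeplitz_A k \<Longrightarrow> N \<in> toeplitz_A k \<Longrightarrow> (\<lambda>p q. c * M p q + d * N p q) \<in> toeplitz_A k"
proof -
  assume "M \<in> toeplitz_A k" "N \<in> toeplitz_A k"
  then obtain a b where "M = tp k a" "N = tp k b" by (metis inV_E)
  then have "(\<lambda>p q. c * M p q + d * N p q) = tp k (\<lambda>m. c * a m + d * b m)"
    by (auto simp: tp_def fun_eq_iff)
  then show ?thesis by simp
qed

lemma V_scale: "M \<in> toeplitz_A k \<Longrightarrow> (\<lambda>p q. c * M p q) \<in> toeplitz_A k"
  using V_lin[of M k M c 0] by simp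

lemma V_neg: "M \<in> toeplitz_A k \<Longrightarrow> (\<lambda>p q. - M p q) \<in> toeplitz_A k"
  using V_lin[of M k M "-1" 0] by simp

lemma V_diff: "M \<in> toeplitz_A k \<Longrightarrow> N \<in> toeplitz_A k \<Longrightarrow> (\<lambda>p q. M p q - N p q) \<in> toeplitz_A k"
  using V_lin[of M k N 1 "-1"] by simp

lemma V_zero: "(\<lambda>p q. 0) \<in> toeplitz_A k"
  using V_lin[of "tp k (\<lambda>_. 0)" k "tp k (\<lambda>_. 0)" 0 0] by simp

lemma V_mmul: "M \<in> toeplitz_A k \<Longrightarrow> N \<in> toeplitz_A k \<Longrightarrow> mmul k M N \<in> toeplitz_A k"
  by (metis inV_E mmul_tp tp_in)

lemma V_strict: "M \<in> toeplitz_A k \<Longrightarrow> q \<le> p \<Longrightarrow> M p q = 0"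
  by (auto elim: inV_E simp: tp_def)

lemma V_out: "M \<in> toeplitz_A k \<Longrightarrow> \<not> q \<le> k \<Longrightarrow> M p q = 0"
  by (auto elim: inV_E simp: tp_def)

lemma V_sum: "(\<forall>i<n. M i \<in> toeplitz_A k) \<Longrightarrow> (\<lambda>p q. \<Sum>i<n. (c i::complex) * M i p q) \<in> toeplitz_A k"
proof -
  assume "\<forall>i<n. M i \<in> toeplitz_A k"
  then have "\<forall>i<n. \<exists>a. M i = tp k a" by (metis inV_E)
  then obtain f where f: "\<forall>i<n. M i = tp k (f i)" by metis
  have "(\<lambda>p q. \<Sum>i<n. c i * M i p q) = tp k (\<lambda>m. \<Sum>i<n. c i * f i m)"
    using f by (auto simp: tp_def fun_eq_iff)
  then show ?thesis by simp
qed


abbreviation "V k \<equiv> aff_carrier k"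

lemma rspan_base: "x \<in> S \<Longrightarrow> x \<in> rspan S"
  unfolding rspan_def
  by (rule CollectI, rule exI[of _ 1], rule exI[of _ "\<lambda>_. 1"], rule exI[of _ "\<lambda>_. x"]) simp

lemma rspan_zero: "vzero \<in> rspan S"
  unfolding rspan_def vzero_def by (rule CollectI, rule exI[of _ 0]) simp

lemma rspan_mono: "S \<subseteq> T \<Longrightarrow> rspan S \<subseteq> rspan T"
  unfolding rspan_def by blast

lemma sum_split_add: "(\<Sum>i<(n1::nat)+n2. f i) = (\<Sum>i<n1. f i) + (\<Sum>i<n2. f (i + n1))"
  by (induction n2) (simp_all add: ac_simps)

lemma rspan_add: assumes "x \<in> rspan S" "y \<in> rspan S" shows "vadd x y \<in> rspan S"
proof -
  obtain n1 :: nat and c1 u1 where 1: "\<forall>i<n1. u1 i \<in> S" "x = ((\<lambda>p q. \<Sum>i<n1. of_real (c1 i) * fst (u1 i) p q),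
           (\<lambda>p q. \<Sum>i<n1. of_real (c1 i) * snd (u1 i) p q))" using assms(1) unfolding rspan_def by blast
  obtain n2 :: nat and c2 u2 where 2: "\<forall>i<n2. u2 i \<in> S" "y = ((\<lambda>p q. \<Sum>i<n2. of_real (c2 i) * fst (u2 i) p q),
           (\<lambda>p q. \<Sum>i<n2. of_real (c2 i) * snd (u2 i) p q))" using assms(2) unfolding rspan_def by blast
  define c where "c = (\<lambda>i. if i < n1 then c1 i else c2 (i - n1))"
  define u where "u = (\<lambda>i. if i < n1 then u1 i else u2 (i - n1))"
  have "\<forall>i<n1+n2. u i \<in> S" using 1 2 by (auto simp: u_def)
  moreover have "vadd x y = ((\<lambda>p q. \<Sum>i<n1+n2. of_real (c i) * fst (u i) p q),
           (\<lambda>p q. \<Sum>i<n1+n2. of_real (c i) * snd (u i) p q))"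
  proof -
    have e1: "(\<Sum>i<n1. of_real (c i) * g (u i)) = (\<Sum>i<n1. of_real (c1 i) * g (u1 i))" for g :: "affel \<Rightarrow> complex"
      by (rule sum.cong) (auto simp: c_def u_def)
    have e2: "(\<Sum>i<n2. of_real (c (i + n1)) * g (u (i + n1))) = (\<Sum>i<n2. of_real (c2 i) * g (u2 i))" for g :: "affel \<Rightarrow> complex"
      by (rule sum.cong) (auto simp: c_def u_def)
    show ?thesis unfolding sum_split_add
      using e1[of "\<lambda>w. fst w _ _"] e2[of "\<lambda>w. fst w _ _"] e1[of "\<lambda>w. snd w _ _"] e2[of "\<lambda>w. snd w _ _"]
      by (simp add: 1(2) 2(2) vadd_def)
  qed
  ultimately show ?thesis unfolding rspan_def mem_Collect_eq
    by (intro exI[of _ "n1+n2"] exI[of _ c] exI[of _ u] conjI)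
qed

lemma rspan_scale: assumes "x \<in> rspan S" shows "vscale a x \<in> rspan S"
proof -
  obtain n1 :: nat and c1 u1 where 1: "\<forall>i<n1. u1 i \<in> S" "x = ((\<lambda>p q. \<Sum>i<n1. of_real (c1 i) * fst (u1 i) p q),
           (\<lambda>p q. \<Sum>i<n1. of_real (c1 i) * snd (u1 i) p q))" using assms(1) unfolding rspan_def by blast
  have "vscale a x = ((\<lambda>p q. \<Sum>i<n1. of_real (a * c1 i) * fst (u1 i) p q),
           (\<lambda>p q. \<Sum>i<n1. of_real (a * c1 i) * snd (u1 i) p q))"
    using 1 by (simp add: vscale_def sum_distrib_left mult.assoc)
  then show ?thesis using 1 unfolding rspan_def mem_Collect_eq
    by (intro exI[of _ n1] exI[of _ "\<lambda>i. a * c1 i"] exI[of _ u1] conjI)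
qed

lemma rspan_sum: "finite I \<Longrightarrow> (\<forall>i\<in>I. f i \<in> rspan S) \<Longrightarrow>
   ((\<lambda>p q. \<Sum>i\<in>I. fst (f i) p q), (\<lambda>p q. \<Sum>i\<in>I. snd (f i) p q)) \<in> rspan S"
proof (induction I rule: finite_induct)
  case empty then show ?case using rspan_zero by (simp add: vzero_def)
next
  case (insert x F)
  then have "vadd (f x) ((\<lambda>p q. \<Sum>i\<in>F. fst (f i) p q), (\<lambda>p q. \<Sum>i\<in>F. snd (f i) p q)) \<in> rspan S"
    by (intro rspan_add) auto
  then show ?case using insert by (simp add: vadd_def)
qed

lemma rspan_V: "rspan (V k) = V k"
proof
  show "V k \<subseteq> rspan (V k)" using rspan_base by blast
  show "rspan (V k) \<subseteq> V k"
  proof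
    fix v assume "v \<in> rspan (V k)"
    then obtain n :: nat and c u where "\<forall>i<n. u i \<in> V k" "v = ((\<lambda>p q. \<Sum>i<n. of_real (c i) * fst (u i) p q),
           (\<lambda>p q. \<Sum>i<n. of_real (c i) * snd (u i) p q))" unfolding rspan_def by blast
    then show "v \<in> V k" unfolding aff_carrier_def
      by (auto intro!: V_sum simp: mem_Times_iff)
  qed
qed

lemma br_in: "x \<in> V k \<Longrightarrow> y \<in> V k \<Longrightarrow> aff_br k x y \<in> V k"
  unfolding aff_carrier_def aff_br_def by (auto simp: mem_Times_iff intro!: V_zero V_diff V_mmul)

lemma lie: "real_lie_algebra (V k) (aff_br k)"
  unfolding real_lie_algebra_def
proof (intro conjI ballI allI)
  show "rspan (V k) = V k" by (rule rspan_V)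
next
  fix x y assume "x \<in> V k" "y \<in> V k" then show "aff_br k x y \<in> V k" by (rule br_in)
next
  fix x y z a b
  show "aff_br k (vadd (vscale a x) (vscale b y)) z = vadd (vscale a (aff_br k x z)) (vscale b (aff_br k y z))"
    by (simp add: aff_br_def vadd_def vscale_def mmul_lin_left mmul_lin_right fun_eq_iff right_diff_distrib)
  show "aff_br k z (vadd (vscale a x) (vscale b y)) = vadd (vscale a (aff_br k z x)) (vscale b (aff_br k z y))"
    by (simp add: aff_br_def vadd_def vscale_def mmul_lin_left mmul_lin_right fun_eq_iff right_diff_distrib)
next
  fix x show "aff_br k x x = vzero" by (simp add: aff_br_def vzero_def)
next
  fix x y z assume V: "x \<in> V k" "y \<in> V k" "z \<in> V k"
  then have W: "fst x \<in> toeplitz_A k" "fst y \<in> toeplitz_A k" "fst z \<in> toeplitz_A k"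
    by (auto simp: aff_carrier_def mem_Times_iff)
  have h1: "mmul k (fst x) (mmul k (fst y) (snd z)) = mmul k (fst y) (mmul k (fst x) (snd z))"
    by (metis W mmul_assoc mmul_comm)
  have h2: "mmul k (fst x) (mmul k (fst z) (snd y)) = mmul k (fst z) (mmul k (fst x) (snd y))"
    by (metis W mmul_assoc mmul_comm)
  have h3: "mmul k (fst y) (mmul k (fst z) (snd x)) = mmul k (fst z) (mmul k (fst y) (snd x))"
    by (metis W mmul_assoc mmul_comm)
  show "vadd (vadd (aff_br k x (aff_br k y z)) (aff_br k y (aff_br k z x))) (aff_br k z (aff_br k x y)) = vzero"
    by (simp add: aff_br_def vadd_def vzero_def mmul_diff_right h1 h2 h3)
qed

lemma hyper: "abelian_hypercomplex_structure (V k) (aff_br k) Jaff Kaff"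
  unfolding abelian_hypercomplex_structure_def abelian_complex_structure_def real_linear_on_def
proof (intro conjI ballI allI)
  fix x assume x: "x \<in> V k"
  then have W: "fst x \<in> toeplitz_A k" "snd x \<in> toeplitz_A k" by (auto simp: aff_carrier_def mem_Times_iff)
  show "Jaff x \<in> V k" using W by (simp add: Jaff_def aff_carrier_def V_neg)
  show "Kaff x \<in> V k" using W by (simp add: Kaff_def aff_carrier_def V_scale V_neg)
  show "Jaff (Jaff x) = vneg x" by (simp add: Jaff_def vneg_def vscale_def)
  show "Kaff (Kaff x) = vneg x" by (simp add: Kaff_def vneg_def vscale_def)
  show "Jaff (Kaff x) = vneg (Kaff (Jaff x))" by (simp add: Jaff_def Kaff_def vneg_def vscale_def)
next
  fix x y a b
  show "Jaff (vadd (vscale a x) (vscale b y)) = vadd (vscale a (Jaff x)) (vscale b (Jaff y))"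
    by (simp add: Jaff_def vadd_def vscale_def fun_eq_iff algebra_simps)
  show "Kaff (vadd (vscale a x) (vscale b y)) = vadd (vscale a (Kaff x)) (vscale b (Kaff y))"
    by (simp add: Kaff_def vadd_def vscale_def fun_eq_iff algebra_simps)
next
  fix x y assume "x \<in> V k" "y \<in> V k"
  then have W: "fst x \<in> toeplitz_A k" "snd x \<in> toeplitz_A k" "fst y \<in> toeplitz_A k" "snd y \<in> toeplitz_A k"
    by (auto simp: aff_carrier_def mem_Times_iff)
  show "aff_br k (Jaff x) (Jaff y) = aff_br k x y"
    using mmul_comm[OF W(1) W(4)] mmul_comm[OF W(2) W(3)]
    by (simp add: Jaff_def aff_br_def mmul_neg_left mmul_neg_right fun_eq_iff)
  show "aff_br k (Kaff x) (Kaff y) = aff_br k x y"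
    by (simp add: Kaff_def aff_br_def mmul_scale_left mmul_scale_right mmul_neg_right mmul_neg_left fun_eq_iff)
qed


definition dl :: "nat \<Rightarrow> complex \<Rightarrow> nat \<Rightarrow> complex" where
  "dl j c = (\<lambda>m. if m = j then c else 0)"

definition eb :: "nat \<Rightarrow> nat \<times> complex \<times> complex \<Rightarrow> affel" where
  "eb k = (\<lambda>(j, c, d). (tp k (dl j c), tp k (dl j d)))"

definition BB :: "nat \<Rightarrow> affel set" where
  "BB k = eb k ` ({1..k} \<times> {(1,0), (\<i>,0), (0,1), (0,\<i>)})"

lemma re_im: "of_real (Re z) + of_real (Im z) * \<i> = z"
  by (simp add: complex_eq_iff)

lemma finite_dimV: "finite_dim (V k)"
  unfolding finite_dim_def
proof (intro exI conjI)
  show "finite (BB k)" unfolding BB_def by simp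
  show BV: "BB k \<subseteq> V k" unfolding BB_def eb_def aff_carrier_def by auto
  show "rspan (BB k) = V k"
  proof
    show "rspan (BB k) \<subseteq> V k" using rspan_mono[OF BV] rspan_V by blast
    show "V k \<subseteq> rspan (BB k)"
    proof
      fix x assume "x \<in> V k"
      then obtain a b where x: "x = (tp k a, tp k b)"
        unfolding aff_carrier_def by (auto simp: mem_Times_iff elim!: inV_E) (metis prod.collapse)
      define g where "g = (\<lambda>j. vadd (vadd (vscale (Re (a j)) (eb k (j,1,0))) (vscale (Im (a j)) (eb k (j,\<i>,0))))
          (vadd (vscale (Re (b j)) (eb k (j,0,1))) (vscale (Im (b j)) (eb k (j,0,\<i>)))))"
      have gin: "\<forall>j\<in>{1..k}. g j \<in> rspan (BB k)"
        unfolding g_def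
        by (intro ballI rspan_add; intro rspan_add rspan_scale; rule rspan_base; auto simp: BB_def)
      have g1: "fst (g j) p q = tp k (dl j (a j)) p q" for j p q
        unfolding g_def using re_im[of "a j"]
        by (simp add: vadd_def vscale_def eb_def tp_def dl_def)
      have g2: "snd (g j) p q = tp k (dl j (b j)) p q" for j p q
        unfolding g_def using re_im[of "b j"]
        by (simp add: vadd_def vscale_def eb_def tp_def dl_def)
      have sm: "(\<Sum>j\<in>{1..k}. tp k (dl j (c j)) p q) = tp k c p q" for c p q
        by (cases "p \<le> k \<and> q \<le> k \<and> p < q") (auto simp: tp_def dl_def)
      have "x = ((\<lambda>p q. \<Sum>j\<in>{1..k}. fst (g j) p q), (\<lambda>p q. \<Sum>j\<in>{1..k}. snd (g j) p q))"
        unfolding g1 g2 sm x by simp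
      then show "x \<in> rspan (BB k)" using rspan_sum[OF _ gin] by simp
    qed
  qed
qed


definition U :: "nat \<Rightarrow> nat \<Rightarrow> affel set" where
  "U k j = {x \<in> V k. \<forall>p q. q \<le> p + j \<longrightarrow> fst x p q = 0 \<and> snd x p q = 0}"

lemma rspan_U: assumes "S \<subseteq> U k j" shows "rspan S \<subseteq> U k j"
proof
  fix v assume v: "v \<in> rspan S"
  have "S \<subseteq> V k" using assms by (auto simp: U_def)
  then have "v \<in> V k" using v rspan_mono rspan_V by blast
  moreover obtain n :: nat and c u where u: "\<forall>i<n. u i \<in> S" and vv: "v = ((\<lambda>p q. \<Sum>i<n. of_real (c i) * fst (u i) p q),
           (\<lambda>p q. \<Sum>i<n. of_real (c i) * snd (u i) p q))" using v unfolding rspan_def by blast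
  have "fst v p q = 0 \<and> snd v p q = 0" if "q \<le> p + j" for p q
  proof -
    have "\<forall>i<n. fst (u i) p q = 0 \<and> snd (u i) p q = 0" using u assms that by (auto simp: U_def)
    then show ?thesis unfolding vv by simp
  qed
  ultimately show "v \<in> U k j" by (auto simp: U_def)
qed

lemma br_U: assumes x: "x \<in> V k" and y: "y \<in> U k j" shows "aff_br k x y \<in> U k (Suc j)"
proof -
  have xy: "x \<in> V k" "y \<in> V k" using x y by (auto simp: U_def)
  have W: "fst x \<in> toeplitz_A k" "snd x \<in> toeplitz_A k" using x by (auto simp: aff_carrier_def mem_Times_iff)
  have Y: "\<And>p q. q \<le> p + j \<Longrightarrow> fst y p q = 0 \<and> snd y p q = 0" using y by (auto simp: U_def)
  have "mmul k (fst x) (snd y) p q = 0 \<and> mmul k (fst y) (snd x) p q = 0" if "q \<le> p + Suc j" for p q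
  proof -
    have z1: "fst x p r * snd y r q = 0" for r
      using V_strict[OF W(1), of r p] Y[of q r] that by (cases "r \<le> p") auto
    have z2: "fst y p r * snd x r q = 0" for r
      using V_strict[OF W(2), of q r] Y[of r p] that by (cases "r \<le> p + j") auto
    show ?thesis unfolding mmul_def by (simp add: z1 z2 del: mult_eq_0_iff)
  qed
  then show ?thesis using br_in[OF xy] by (auto simp: U_def aff_br_def)
qed

lemma lcs_U: "lcs (aff_br k) (V k) j \<subseteq> U k j"
proof (induction j)
  case 0
  show ?case by (auto simp: U_def aff_carrier_def mem_Times_iff intro: V_strict)
next
  case (Suc j)
  show ?case unfolding lcs.simps
    by (rule rspan_U) (use Suc br_U in blast)
qed

lemma conv_dl: "conv (dl 1 1) (dl (Suc j) 1) = dl (Suc (Suc j)) 1"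
proof
  fix m
  have "conv (dl 1 1) (dl (Suc j) 1) m = (\<Sum>i\<in>{0<..<m}. if i = 1 then (if m - 1 = Suc j then 1 else 0) else 0)"
    unfolding conv_def dl_def by (rule sum.cong) auto
  also have "\<dots> = dl (Suc (Suc j)) 1 m" by (auto simp: dl_def)
  finally show "conv (dl 1 1) (dl (Suc j) 1) m = dl (Suc (Suc j)) 1 m" .
qed

lemma lcs_E: "((\<lambda>p q. 0), tp k (dl (Suc j) 1)) \<in> lcs (aff_br k) (V k) j"
proof (induction j)
  case 0 then show ?case by (simp add: aff_carrier_def V_zero)
next
  case (Suc j)
  have e: "aff_br k (tp k (dl 1 1), (\<lambda>p q. 0)) ((\<lambda>p q. 0), tp k (dl (Suc j) 1)) = ((\<lambda>p q. 0), tp k (dl (Suc (Suc j)) 1))"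
    by (simp add: aff_br_def mmul_tp conv_dl conv_dl[unfolded One_nat_def])
  have "(tp k (dl 1 1), (\<lambda>p q. 0)) \<in> V k" by (simp add: aff_carrier_def V_zero)
  then show ?case unfolding lcs.simps e[symmetric] using Suc by (intro rspan_base) blast
qed

lemma nilp: assumes "1 \<le> k" shows "k_step_nilpotent (aff_br k) (V k) k"
  unfolding k_step_nilpotent_def
proof (intro conjI)
  show "1 \<le> k" by fact
  obtain m where m: "k = Suc m" using assms by (cases k) auto
  have "lcs (aff_br k) (V k) k \<subseteq> {vzero}"
  proof
    fix x assume "x \<in> lcs (aff_br k) (V k) k"
    then have x: "x \<in> U k k" using lcs_U by blast
    then have W: "fst x \<in> toeplitz_A k" "snd x \<in> toeplitz_A k" by (auto simp: U_def aff_carrier_def mem_Times_iff)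
    have "fst x p q = 0 \<and> snd x p q = 0" for p q
      using x V_out[OF W(1)] V_out[OF W(2)] by (cases "q \<le> k") (auto simp: U_def)
    then show "x \<in> {vzero}" by (simp add: vzero_def prod_eq_iff fun_eq_iff)
  qed
  moreover have "vzero \<in> lcs (aff_br k) (V k) k" unfolding m lcs.simps by (rule rspan_zero)
  ultimately show "lcs (aff_br k) (V k) k = {vzero}" by blast
  have "((\<lambda>p q. 0), tp k (dl k 1)) \<in> lcs (aff_br k) (V k) (k - 1)" using lcs_E[of k m] m by simp
  moreover have "((\<lambda>p q. 0), tp k (dl k 1)) \<noteq> vzero"
  proof
    assume "((\<lambda>p q. 0), tp k (dl k 1)) = vzero"
    then have "tp k (dl k 1) 0 k = 0" by (simp add: vzero_def)
    then show False using m by (simp add: tp_def dl_def)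
  qed
  ultimately show "lcs (aff_br k) (V k) (k - 1) \<noteq> {vzero}" by blast
qed

theorem mainTheorem10:
  fixes k :: nat
  assumes "1 \<le> k"
  shows "real_lie_algebra (aff_carrier k) (aff_br k)
       \<and> finite_dim (aff_carrier k)
       \<and> k_step_nilpotent (aff_br k) (aff_carrier k) k
       \<and> abelian_hypercomplex_structure (aff_carrier k) (aff_br k) Jaff Kaff"
  using lie finite_dimV nilp[OF assms] hyper by blast

end
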